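(* Let $L>0$, let $f:\mathbb{R}^d\to\mathbb{R}$ be convex and differentiable with $L$-Lipschitz gradient, with global minimum value $f_*$. Let $x_0\in\mathbb{R}^d$, $h_0,\dots,h_{N-1}\in(0,\tfrac32]$, and $x_{i+1}=x_i-\frac{h_i}{L}\nabla f(x_i)$. Then $$\|\nabla f(x_N)\|^2\le\frac{L[f(x_0)-f(x_N)]}{\sum_{i=0}^{N-1}h_i}\quad\text{and}\quad\|\nabla f(x_N)\|^2\le\frac{L[f(x_0)-f_*]}{\tfrac12+\sum_{i=0}^{N-1}h_i}.$$ Moreover both bounds are tight: for any such $L,N,h_i$ and any $\Delta>0$ there exist a convex $f$ with $L$-Lipschitz gradient (on $\mathbb{R}$) and $x_0$ with $f(x_0)-f(x_N)=\Delta$ attaining equality in the first bound, and likewise a convex $f$ with $L$-Lipschitz gradient and $x_0$ with $f(x_0)-f_*=\Delta$ attaining equality in the second bound. *)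

theory Defs
  imports "HOL-Analysis.Analysis"
begin

end

theory Submission
  imports Defs
begin

lemma line_deriv:
  fixes f :: "'a::real_inner \<Rightarrow> real"
  assumes gd: "\<forall>y. GDERIV f y :> g y"
  shows "((\<lambda>t. f (x + t *\<^sub>R d)) has_real_derivative (g (x + t *\<^sub>R d) \<bullet> d)) (at t within S)"
proof -
  have l: "((\<lambda>t. x + t *\<^sub>R d) has_derivative (\<lambda>s. s *\<^sub>R d)) (at t within S)"
    by (auto intro!: derivative_eq_intros)
  have "(f has_derivative (\<lambda>h. h \<bullet> g (x + t *\<^sub>R d))) (at (x + t *\<^sub>R d))"
    using gd gderiv_def by blast
  from has_derivative_compose[OF l this]
  have "((\<lambda>t. f (x + t *\<^sub>R d)) has_derivative (\<lambda>s. (s *\<^sub>R d) \<bullet> g (x + t *\<^sub>R d))) (at t within S)" .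
  then show ?thesis unfolding has_field_derivative_def
    by (rule has_derivative_eq_rhs) (auto simp: inner_commute mult.commute)
qed

lemma line_convex:
  fixes f :: "'a::real_inner \<Rightarrow> real"
  assumes "convex_on UNIV f"
  shows "convex_on UNIV (\<lambda>t::real. f (x + t *\<^sub>R d))"
proof (rule convex_onI)
  fix u s t :: real assume u: "u > 0" "u < 1"
  have "x + ((1 - u) *\<^sub>R s + u *\<^sub>R t) *\<^sub>R d = (1 - u) *\<^sub>R (x + s *\<^sub>R d) + u *\<^sub>R (x + t *\<^sub>R d)"
    by (simp add: algebra_simps)
  then show "f (x + ((1 - u) *\<^sub>R s + u *\<^sub>R t) *\<^sub>R d) \<le> (1 - u) * f (x + s *\<^sub>R d) + u * f (x + t *\<^sub>R d)"
    using convex_onD[OF assms, of u] u by simp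
qed simp

lemma above_tangent:
  fixes f :: "'a::real_inner \<Rightarrow> real"
  assumes "convex_on UNIV f" "\<forall>y. GDERIV f y :> g y"
  shows "f x \<ge> f y + g y \<bullet> (x - y)"
proof -
  have "(\<lambda>t. f (y + t *\<^sub>R (x - y))) 1 - (\<lambda>t. f (y + t *\<^sub>R (x - y))) 0 \<ge> (g (y + 0 *\<^sub>R (x - y)) \<bullet> (x - y)) * (1 - 0)"
  proof (rule convex_on_imp_above_tangent[OF line_convex[OF assms(1)]])
    show "((\<lambda>t. f (y + t *\<^sub>R (x - y))) has_real_derivative (g (y + 0 *\<^sub>R (x - y)) \<bullet> (x - y))) (at 0 within UNIV)"
      by (rule line_deriv[OF assms(2)])
  qed auto
  then show ?thesis by simp
qed

lemma descent:
  fixes f :: "'a::real_inner \<Rightarrow> real"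
  assumes gd: "\<forall>y. GDERIV f y :> g y" and lip: "\<forall>y z. norm (g y - g z) \<le> L * norm (y - z)"
  shows "f y \<le> f x + g x \<bullet> (y - x) + L / 2 * (norm (y - x))\<^sup>2"
proof -
  define d where "d = y - x"
  define \<psi> where "\<psi> t = f (x + t *\<^sub>R d) - t * (g x \<bullet> d) - L / 2 * t\<^sup>2 * (norm d)\<^sup>2" for t
  have ex: "\<exists>y. (\<psi> has_real_derivative y) (at t) \<and> y \<le> 0" if t: "0 \<le> t" "t \<le> 1" for t
  proof -
    have D: "(\<psi> has_real_derivative (g (x + t *\<^sub>R d) \<bullet> d - g x \<bullet> d - L / 2 * (2 * t) * (norm d)\<^sup>2)) (at t)"
      unfolding \<psi>_def
      by (auto intro!: derivative_eq_intros line_deriv[OF gd])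
    have "g (x + t *\<^sub>R d) \<bullet> d - g x \<bullet> d = (g (x + t *\<^sub>R d) - g x) \<bullet> d" by (simp add: inner_diff_left)
    also have "\<dots> \<le> norm (g (x + t *\<^sub>R d) - g x) * norm d" by (rule norm_cauchy_schwarz)
    also have "\<dots> \<le> (L * norm (t *\<^sub>R d)) * norm d"
      using lip[rule_format, of "x + t *\<^sub>R d" x] by (intro mult_right_mono) auto
    also have "\<dots> = L * t * (norm d)\<^sup>2" using t by (simp add: power2_eq_square)
    finally have "g (x + t *\<^sub>R d) \<bullet> d - g x \<bullet> d - L / 2 * (2 * t) * (norm d)\<^sup>2 \<le> 0" by simp
    then show ?thesis using D by blast
  qed
  have "\<psi> 0 \<ge> \<psi> 1" by (rule DERIV_nonpos_imp_nonincreasing[of 0 1 \<psi>]) (simp, rule ex)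
  then show ?thesis unfolding \<psi>_def d_def by simp
qed


lemma interp:
  fixes f :: "'a::real_inner \<Rightarrow> real"
  assumes cv: "convex_on UNIV f" and gd: "\<forall>y. GDERIV f y :> g y"
    and lip: "\<forall>y z. norm (g y - g z) \<le> L * norm (y - z)" and L: "L > 0"
  shows "f x \<ge> f y + g y \<bullet> (x - y) + (norm (g x - g y))\<^sup>2 / (2 * L)"
proof -
  define \<phi> where "\<phi> z = f z - g y \<bullet> z" for z
  define G where "G z = g z - g y" for z
  have gd2: "\<forall>z. GDERIV \<phi> z :> G z"
  proof
    fix z
    have "(f has_derivative (\<lambda>h. h \<bullet> g z)) (at z)" using gd gderiv_def by blast
    then have "(\<phi> has_derivative (\<lambda>h. h \<bullet> g z - g y \<bullet> h)) (at z)"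
      unfolding \<phi>_def by (auto intro!: derivative_eq_intros)
    then show "GDERIV \<phi> z :> G z" unfolding gderiv_def G_def
      by (rule has_derivative_eq_rhs) (auto simp: inner_diff_right inner_commute)
  qed
  have lip2: "\<forall>u v. norm (G u - G v) \<le> L * norm (u - v)" using lip by (simp add: G_def)
  define w where "w = x - (1 / L) *\<^sub>R G x"
  have "\<phi> w \<le> \<phi> x + G x \<bullet> (w - x) + L / 2 * (norm (w - x))\<^sup>2" by (rule descent[OF gd2 lip2])
  also have "\<dots> = \<phi> x - (norm (G x))\<^sup>2 / (2 * L)"
  proof -
    have a: "G x \<bullet> (w - x) = - (norm (G x))\<^sup>2 / L" by (simp add: w_def power2_norm_eq_inner)
    have b: "(norm (w - x))\<^sup>2 = (norm (G x))\<^sup>2 / L\<^sup>2" using L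
      by (simp add: w_def power_divide power_mult_distrib)
    show ?thesis unfolding a b using L by (simp add: field_simps power2_eq_square)
  qed
  finally have 1: "\<phi> w \<le> \<phi> x - (norm (G x))\<^sup>2 / (2 * L)" .
  have "f w \<ge> f y + g y \<bullet> (w - y)" by (rule above_tangent[OF cv gd])
  then have "\<phi> y \<le> \<phi> w" by (simp add: \<phi>_def inner_diff_right)
  with 1 show ?thesis by (simp add: \<phi>_def G_def inner_diff_right)
qed

lemma step_alg:
  fixes h aa ab bb D :: real
  assumes "D \<ge> h*ab + (aa-2*ab+bb)/2" "-D \<ge> -h*aa + (aa-2*ab+bb)/2" "h \<le> 3/2" "h > 0"
    "aa-2*ab+bb \<ge> 0"
  shows "D \<ge> h*bb" "bb \<le> aa"
proof -
  have p: "(3/2 - h) * (aa-2*ab+bb) \<ge> 0" using assms by simp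
  moreover have "(3/2 - h) * (aa-2*ab+bb) = 3/2*(aa-2*ab+bb) - (h*aa - 2*(h*ab) + h*bb)" by (simp add: algebra_simps)
  ultimately have "h*aa - 2*(h*ab) + h*bb \<le> 3/2*(aa-2*ab+bb)" by linarith
  then show "D \<ge> h*bb" using assms(1,2) by linarith
  have "(2 - h) * (aa-2*ab+bb) \<ge> 0" using assms by simp
  moreover have "(2 - h) * (aa-2*ab+bb) = 2*(aa-2*ab+bb) - (h*aa - 2*(h*ab) + h*bb)" by (simp add: algebra_simps)
  ultimately have "h*aa - 2*(h*ab) + h*bb \<le> 2*(aa-2*ab+bb)" by linarith
  then have "h * bb \<le> h * aa" using assms(1,2) by linarith
  then show "bb \<le> aa" using assms(4) by simp
qed


lemma nn: "norm (v::'a::real_inner) * norm v = v \<bullet> v"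
  by (metis power2_norm_eq_inner power2_eq_square)

lemma part1:
  fixes f :: "'a::euclidean_space \<Rightarrow> real" and g :: "'a \<Rightarrow> 'a" and x :: "nat \<Rightarrow> 'a"
    and L :: real and N :: nat and h :: "nat \<Rightarrow> real"
  assumes L: "L > 0" and N: "N \<ge> 1" and hr: "\<forall>i<N. 0 < h i \<and> h i \<le> 3/2"
    and cv: "convex_on UNIV f" and gd: "\<forall>y. GDERIV f y :> g y"
    and lip: "\<forall>y z. norm (g y - g z) \<le> L * norm (y - z)"
    and fs1: "\<exists>y. f y = fstar" and fs2: "\<forall>y. fstar \<le> f y"
    and it: "\<forall>i<N. x (Suc i) = x i - (h i / L) *\<^sub>R g (x i)"
  shows "(norm (g (x N)))\<^sup>2 \<le> L * (f (x 0) - f (x N)) / (\<Sum>i<N. h i)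
       \<and> (norm (g (x N)))\<^sup>2 \<le> L * (f (x 0) - fstar) / (1/2 + (\<Sum>i<N. h i))"
proof -
  have st: "L * (f (x i) - f (x (Suc i))) \<ge> h i * (norm (g (x (Suc i))))\<^sup>2
     \<and> (norm (g (x (Suc i))))\<^sup>2 \<le> (norm (g (x i)))\<^sup>2" if i: "i < N" for i
  proof -
    define a where "a = g (x i)"
    define b where "b = g (x (Suc i))"
    have hi: "0 < h i" "h i \<le> 3/2" using hr i by auto
    have e: "x i - x (Suc i) = (h i / L) *\<^sub>R a" using it i by (simp add: a_def)
    have I1: "f (x i) \<ge> f (x (Suc i)) + b \<bullet> (x i - x (Suc i)) + (norm (a - b))\<^sup>2 / (2 * L)"
      unfolding a_def b_def by (rule interp[OF cv gd lip L])
    have I2: "f (x (Suc i)) \<ge> f (x i) + a \<bullet> (x (Suc i) - x i) + (norm (b - a))\<^sup>2 / (2 * L)"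
      unfolding a_def b_def by (rule interp[OF cv gd lip L])
    have n: "(norm (a - b))\<^sup>2 = a \<bullet> a - 2 * (a \<bullet> b) + b \<bullet> b"
      by (simp add: power2_norm_eq_inner inner_diff algebra_simps inner_commute)
    have n2: "norm (b - a) = norm (a - b)" by (rule norm_minus_commute)
    have e1: "b \<bullet> (x i - x (Suc i)) = h i / L * (a \<bullet> b)" unfolding e by (simp add: inner_commute)
    have e2: "a \<bullet> (x (Suc i) - x i) = - (h i / L * (a \<bullet> a))"
      using arg_cong[OF e, of "\<lambda>v. a \<bullet> v"] by (simp add: inner_diff_right)
    define s where "s = a \<bullet> a - 2 * (a \<bullet> b) + b \<bullet> b"
    have I1': "f (x i) - f (x (Suc i)) \<ge> (h i * (a \<bullet> b) + s / 2) / L"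
      using I1 unfolding e1 n s_def[symmetric] using L by (simp add: field_simps)
    have I2': "f (x (Suc i)) - f (x i) \<ge> (- h i * (a \<bullet> a) + s / 2) / L"
      using I2 unfolding e2 n2 n s_def[symmetric] using L by (simp add: field_simps)
    have J1: "L * (f (x i) - f (x (Suc i))) \<ge> h i * (a \<bullet> b) + s / 2"
      using I1' L by (simp add: field_simps)
    have J2: "- (L * (f (x i) - f (x (Suc i)))) \<ge> - h i * (a \<bullet> a) + s / 2"
      using I2' L by (simp add: field_simps)
    have s0: "s \<ge> 0" unfolding s_def n[symmetric] by simp
    have "L * (f (x i) - f (x (Suc i))) \<ge> h i * (b \<bullet> b) \<and> b \<bullet> b \<le> a \<bullet> a"
      using step_alg[of "h i" "a \<bullet> b" "a \<bullet> a" "b \<bullet> b" "L * (f (x i) - f (x (Suc i)))"]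
        J1 J2 hi s0 unfolding s_def by auto
    then show ?thesis by (simp add: a_def b_def power2_norm_eq_inner)
  qed
  have mono: "(norm (g (x N)))\<^sup>2 \<le> (norm (g (x (N - k))))\<^sup>2" if "k \<le> N" for k
    using that
  proof (induction k)
    case 0 then show ?case by simp
  next
    case (Suc k)
    have "N - Suc k < N" "Suc (N - Suc k) = N - k" using Suc.prems by auto
    with st[of "N - Suc k"] have "(norm (g (x (N - k))))\<^sup>2 \<le> (norm (g (x (N - Suc k))))\<^sup>2" by metis
    with Suc show ?case by simp
  qed
  have mono2: "(norm (g (x N)))\<^sup>2 \<le> (norm (g (x (Suc i))))\<^sup>2" if "i < N" for i
    using mono[of "N - Suc i"] that by (simp add: Suc_diff_Suc)
  define S where "S = (\<Sum>i<N. h i)"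
  define G where "G = (norm (g (x N)))\<^sup>2"
  have S0: "S > 0" unfolding S_def using N hr by (intro sum_pos) (auto simp: lessThan_empty_iff)
  have "L * (f (x 0) - f (x N)) = (\<Sum>i<N. L * (f (x i) - f (x (Suc i))))"
    using sum_lessThan_telescope'[of "\<lambda>i. f (x i)" N] by (simp add: sum_distrib_left[symmetric])
  also have "\<dots> \<ge> (\<Sum>i<N. h i * G)"
  proof (rule sum_mono)
    fix i assume "i \<in> {..<N}"
    then have i: "i < N" by simp
    have "h i * G \<le> h i * (norm (g (x (Suc i))))\<^sup>2"
      using mono2[OF i] hr i unfolding G_def by (intro mult_left_mono) auto
    then show "h i * G \<le> L * (f (x i) - f (x (Suc i)))" using st[OF i] by linarith
  qed
  finally have main: "S * G \<le> L * (f (x 0) - f (x N))" by (simp add: S_def sum_distrib_right)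
  obtain y0 where "f y0 = fstar" using fs1 by blast
  have "fstar \<le> f (x N - (1 / L) *\<^sub>R g (x N))" using fs2 by blast
  also have "\<dots> \<le> f (x N) + g (x N) \<bullet> ((x N - (1 / L) *\<^sub>R g (x N)) - x N) + L / 2 * (norm ((x N - (1 / L) *\<^sub>R g (x N)) - x N))\<^sup>2"
    by (rule descent[OF gd lip])
  also have "\<dots> = f (x N) - G / (2 * L)"
    using L by (simp add: G_def power2_norm_eq_inner power_divide field_simps power2_eq_square nn)
  finally have "L * (f (x N) - fstar) \<ge> G / 2" using L by (simp add: field_simps)
  with main have main2: "(1/2 + S) * G \<le> L * (f (x 0) - fstar)" by (simp add: algebra_simps)
  have T0: "1/2 + S > 0" using S0 by simp
  show ?thesis
    using main main2 S0 T0 unfolding S_def[symmetric] G_def[symmetric]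
    by (simp add: pos_le_divide_eq mult.commute)
qed


lemma part2:
  fixes L :: real and N :: nat and h :: "nat \<Rightarrow> real" and \<Delta> :: real
  assumes L: "L > 0" and N: "N \<ge> 1" and hr: "\<forall>i<N. 0 < h i \<and> h i \<le> 3/2" and D: "\<Delta> > 0"
  shows "\<exists>(f :: real \<Rightarrow> real) (g :: real \<Rightarrow> real) (x :: nat \<Rightarrow> real).
       convex_on UNIV f
     \<and> (\<forall>y. GDERIV f y :> g y)
     \<and> (\<forall>y z. norm (g y - g z) \<le> L * norm (y - z))
     \<and> (\<forall>i<N. x (Suc i) = x i - (h i / L) *\<^sub>R g (x i))
     \<and> f (x 0) - f (x N) = \<Delta>
     \<and> (norm (g (x N)))\<^sup>2 = L * (f (x 0) - f (x N)) / (\<Sum>i<N. h i)"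
proof -
  define S where "S = (\<Sum>i<N. h i)"
  have S0: "S > 0" unfolding S_def using N hr by (intro sum_pos) (auto simp: lessThan_empty_iff)
  define c where "c = sqrt (L * \<Delta> / S)"
  have c2: "c\<^sup>2 = L * \<Delta> / S" unfolding c_def using L D S0 by simp
  define f where "f = (\<lambda>y::real. c * y)"
  define g where "g = (\<lambda>y::real. c)"
  define x where "x = (\<lambda>i. - (c / L) * (\<Sum>j<i. h j))"
  have cv: "convex_on UNIV f"
    by (rule convex_on_realI[where f' = g]) (auto simp: f_def g_def intro!: derivative_eq_intros)
  have gd: "\<forall>y. GDERIV f y :> g y" by (auto simp: f_def g_def intro!: derivative_eq_intros)
  have lip: "\<forall>y z. norm (g y - g z) \<le> L * norm (y - z)" using L by (simp add: g_def)
  have it: "\<forall>i<N. x (Suc i) = x i - (h i / L) *\<^sub>R g (x i)"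
    by (simp add: x_def g_def algebra_simps add_divide_distrib)
  have fd: "f (x 0) - f (x N) = c\<^sup>2 * S / L"
    by (simp add: f_def x_def S_def power2_eq_square)
  also have "\<dots> = \<Delta>" using c2 L S0 by simp
  finally have fd2: "f (x 0) - f (x N) = \<Delta>" .
  have last: "(norm (g (x N)))\<^sup>2 = L * (f (x 0) - f (x N)) / (\<Sum>i<N. h i)"
    using c2 fd2 by (simp add: g_def S_def)
  show ?thesis using cv gd lip it fd2 last by blast
qed

lemma part3:
  fixes L :: real and N :: nat and h :: "nat \<Rightarrow> real" and \<Delta> :: real
  assumes L: "L > 0" and N: "N \<ge> 1" and hr: "\<forall>i<N. 0 < h i \<and> h i \<le> 3/2" and D: "\<Delta> > 0"
  shows "\<exists>(f :: real \<Rightarrow> real) (g :: real \<Rightarrow> real) (x :: nat \<Rightarrow> real) (fstar :: real).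
       convex_on UNIV f
     \<and> (\<forall>y. GDERIV f y :> g y)
     \<and> (\<forall>y z. norm (g y - g z) \<le> L * norm (y - z))
     \<and> (\<exists>y. f y = fstar) \<and> (\<forall>y. fstar \<le> f y)
     \<and> (\<forall>i<N. x (Suc i) = x i - (h i / L) *\<^sub>R g (x i))
     \<and> f (x 0) - fstar = \<Delta>
     \<and> (norm (g (x N)))\<^sup>2 = L * (f (x 0) - fstar) / (1/2 + (\<Sum>i<N. h i))"
proof -
  define S where "S = (\<Sum>i<N. h i)"
  have S0: "S > 0" unfolding S_def using N hr by (intro sum_pos) (auto simp: lessThan_empty_iff)
  define T where "T = 1/2 + S"
  have T0: "T > 0" using S0 by (simp add: T_def)
  define c where "c = sqrt (L * \<Delta> / T)"
  have c2: "c\<^sup>2 = L * \<Delta> / T" unfolding c_def using L D T0 by simp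
  have c0: "c > 0" unfolding c_def using L D T0 by simp
  define a where "a = c / L"
  have a0: "a > 0" using c0 L by (simp add: a_def)
  have La: "L * a = c" using L by (simp add: a_def)
  define f where "f = (\<lambda>y::real. if y \<in> {..a} then L / 2 * y\<^sup>2 else c * y - c\<^sup>2 / (2 * L))"
  define g where "g = (\<lambda>y::real. min (L * y) c)"
  define x where "x = (\<lambda>i. a * (1 + S) - a * (\<Sum>j<i. h j))"
  have gd: "\<forall>y. GDERIV f y :> g y"
  proof
    fix y :: real
    have U: "{..a} \<union> {a<..} = (UNIV :: real set)" by auto
    have "((\<lambda>y. if y \<in> {..a} then L / 2 * y\<^sup>2 else c * y - c\<^sup>2 / (2 * L)) has_derivative
      (if y \<in> {..a} then (\<lambda>t. t * (L * y)) else (\<lambda>t. t * c))) (at y within ({..a} \<union> {a<..}))"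
    proof (rule has_derivative_If_within_closures)
      show "((\<lambda>y. L / 2 * y\<^sup>2) has_derivative (\<lambda>t. t * (L * y))) (at y within {..a} \<union> (closure {..a} \<inter> closure {a<..}))"
        by (rule has_derivative_at_withinI) (auto intro!: derivative_eq_intros)
      show "((\<lambda>y. c * y - c\<^sup>2 / (2 * L)) has_derivative (\<lambda>t. t * c)) (at y within {a<..} \<union> (closure {..a} \<inter> closure {a<..}))"
        by (rule has_derivative_at_withinI) (auto intro!: derivative_eq_intros)
      show "L / 2 * y\<^sup>2 = c * y - c\<^sup>2 / (2 * L)" if "y \<in> closure {..a}" "y \<in> closure {a<..}"
      proof -
        have "y = a" using that by auto
        then have "c = L * y" using La by simp
        then show ?thesis using L by (simp add: power2_eq_square field_simps)
      qed
      show "(\<lambda>t. t * (L * y)) = (\<lambda>t. t * c)" if "y \<in> closure {..a}" "y \<in> closure {a<..}"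
      proof -
        have "y = a" using that by auto
        then show ?thesis using La by simp
      qed
    qed auto
    then have "(f has_derivative (\<lambda>t. t * g y)) (at y)"
      unfolding f_def U
    proof (rule has_derivative_eq_rhs)
      show "(if y \<in> {..a} then (\<lambda>t. t * (L * y)) else (\<lambda>t. t * c)) = (\<lambda>t. t * g y)"
        using La L by (auto simp: g_def min_def)
    qed
    then show "GDERIV f y :> g y" unfolding gderiv_def inner_real_def .
  qed
  have cv: "convex_on UNIV f"
  proof (rule convex_on_realI[where f' = g])
    show "(f has_real_derivative g y) (at y)" for y using gd by simp
    show "g u \<le> g v" if "u \<le> v" for u v using that L by (auto simp: g_def min_def) (smt (verit) mult_left_mono)+
  qed auto
  have lip: "\<forall>y z. norm (g y - g z) \<le> L * norm (y - z)"
  proof (intro allI)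
    fix y z :: real
    show "norm (g y - g z) \<le> L * norm (y - z)"
      using L by (simp add: g_def min_def abs_if right_diff_distrib) (smt (verit) mult_left_mono mult_strict_left_mono)
  qed
  have f0: "f 0 = 0" using a0 by (simp add: f_def)
  have fpos: "\<forall>y. 0 \<le> f y"
  proof
    fix y :: real
    show "0 \<le> f y"
    proof (cases "y \<le> a")
      case True then show ?thesis using L by (simp add: f_def)
    next
      case False
      then have "c * y \<ge> c * a" using c0 by simp
      moreover have "c * a = c\<^sup>2 / L" using L by (simp add: a_def power2_eq_square)
      moreover have "c\<^sup>2 / (2 * L) \<le> c\<^sup>2 / L" using L by (simp add: field_simps)
      ultimately show ?thesis using False by (simp add: f_def)
    qed
  qed
  have psum: "(\<Sum>j<i. h j) + h i \<le> S" if "i < N" for i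
  proof -
    have "(\<Sum>j<i. h j) + h i = (\<Sum>j<Suc i. h j)" by simp
    also have "\<dots> \<le> S" unfolding S_def using that hr
      by (intro sum_mono2) (auto simp: less_imp_le)
    finally show ?thesis .
  qed
  have it: "\<forall>i<N. x (Suc i) = x i - (h i / L) *\<^sub>R g (x i)"
  proof (intro allI impI)
    fix i assume i: "i < N"
    have "(\<Sum>j<i. h j) \<le> S" using psum[OF i] hr i by force
    then have "a * (\<Sum>j<i. h j) \<le> a * S" using a0 by (intro mult_left_mono) auto
    then have "x i \<ge> a" using a0 by (simp add: x_def algebra_simps)
    then have "g (x i) = c" using L La by (auto simp: g_def min_def)
    then show "x (Suc i) = x i - (h i / L) *\<^sub>R g (x i)"
      by (simp add: x_def a_def algebra_simps add_divide_distrib)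
  qed
  have xN: "x N = a" by (simp add: x_def S_def algebra_simps)
  have gN: "g (x N) = c" using xN La by (simp add: g_def)
  have x0: "x 0 = a * (1 + S)" by (simp add: x_def)
  have fx0: "f (x 0) = \<Delta>"
  proof -
    have "\<not> x 0 \<le> a" using x0 a0 S0 by simp
    then have "f (x 0) = c * (a * (1 + S)) - c\<^sup>2 / (2 * L)" by (simp add: f_def x0)
    also have "\<dots> = c\<^sup>2 * T / L" using L by (simp add: a_def T_def power2_eq_square field_simps)
    also have "\<dots> = \<Delta>" using c2 L T0 by simp
    finally show ?thesis .
  qed
  have last: "(norm (g (x N)))\<^sup>2 = L * (f (x 0) - 0) / (1/2 + (\<Sum>i<N. h i))"
    using c2 fx0 gN by (simp add: T_def S_def)
  show ?thesis
    apply (rule exI[of _ f], rule exI[of _ g], rule exI[of _ x], rule exI[of _ 0])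
    using cv gd lip f0 fpos it fx0 last by auto
qed

theorem proposition4p4:
  fixes L :: real and N :: nat and h :: "nat \<Rightarrow> real"
  assumes L_pos: "L > 0"
    and N_pos: "N \<ge> 1"
    and h_range: "\<forall>i<N. 0 < h i \<and> h i \<le> 3/2"
  shows
   "(\<forall>(f :: 'a::euclidean_space \<Rightarrow> real) (g :: 'a \<Rightarrow> 'a) (x :: nat \<Rightarrow> 'a) (fstar :: real).
       convex_on UNIV f
     \<and> (\<forall>y. GDERIV f y :> g y)
     \<and> (\<forall>y z. norm (g y - g z) \<le> L * norm (y - z))
     \<and> (\<exists>y. f y = fstar) \<and> (\<forall>y. fstar \<le> f y)
     \<and> (\<forall>i<N. x (Suc i) = x i - (h i / L) *\<^sub>R g (x i))
     \<longrightarrow> (norm (g (x N)))\<^sup>2 \<le> L * (f (x 0) - f (x N)) / (\<Sum>i<N. h i)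
       \<and> (norm (g (x N)))\<^sup>2 \<le> L * (f (x 0) - fstar) / (1/2 + (\<Sum>i<N. h i)))
  \<and> (\<forall>\<Delta>>0. \<exists>(f :: real \<Rightarrow> real) (g :: real \<Rightarrow> real) (x :: nat \<Rightarrow> real).
       convex_on UNIV f
     \<and> (\<forall>y. GDERIV f y :> g y)
     \<and> (\<forall>y z. norm (g y - g z) \<le> L * norm (y - z))
     \<and> (\<forall>i<N. x (Suc i) = x i - (h i / L) *\<^sub>R g (x i))
     \<and> f (x 0) - f (x N) = \<Delta>
     \<and> (norm (g (x N)))\<^sup>2 = L * (f (x 0) - f (x N)) / (\<Sum>i<N. h i))
  \<and> (\<forall>\<Delta>>0. \<exists>(f :: real \<Rightarrow> real) (g :: real \<Rightarrow> real) (x :: nat \<Rightarrow> real) (fstar :: real).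
       convex_on UNIV f
     \<and> (\<forall>y. GDERIV f y :> g y)
     \<and> (\<forall>y z. norm (g y - g z) \<le> L * norm (y - z))
     \<and> (\<exists>y. f y = fstar) \<and> (\<forall>y. fstar \<le> f y)
     \<and> (\<forall>i<N. x (Suc i) = x i - (h i / L) *\<^sub>R g (x i))
     \<and> f (x 0) - fstar = \<Delta>
     \<and> (norm (g (x N)))\<^sup>2 = L * (f (x 0) - fstar) / (1/2 + (\<Sum>i<N. h i)))"
  proof (intro conjI allI impI)
  fix f :: "'a::euclidean_space \<Rightarrow> real" and g :: "'a \<Rightarrow> 'a" and x :: "nat \<Rightarrow> 'a" and fstar :: real
  assume H: "convex_on UNIV f
     \<and> (\<forall>y. GDERIV f y :> g y)
     \<and> (\<forall>y z. norm (g y - g z) \<le> L * norm (y - z))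
     \<and> (\<exists>y. f y = fstar) \<and> (\<forall>y. fstar \<le> f y)
     \<and> (\<forall>i<N. x (Suc i) = x i - (h i / L) *\<^sub>R g (x i))"
  have R: "(norm (g (x N)))\<^sup>2 \<le> L * (f (x 0) - f (x N)) / (\<Sum>i<N. h i)
       \<and> (norm (g (x N)))\<^sup>2 \<le> L * (f (x 0) - fstar) / (1/2 + (\<Sum>i<N. h i))"
    using H by (intro part1[OF L_pos N_pos h_range]) auto
  then show "(norm (g (x N)))\<^sup>2 \<le> L * (f (x 0) - f (x N)) / (\<Sum>i<N. h i)" by blast
  from R show "(norm (g (x N)))\<^sup>2 \<le> L * (f (x 0) - fstar) / (1/2 + (\<Sum>i<N. h i))" by blast
next
  fix \<Delta> :: real assume "\<Delta> > 0"
  then show "\<exists>(f :: real \<Rightarrow> real) (g :: real \<Rightarrow> real) (x :: nat \<Rightarrow> real).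
       convex_on UNIV f
     \<and> (\<forall>y. GDERIV f y :> g y)
     \<and> (\<forall>y z. norm (g y - g z) \<le> L * norm (y - z))
     \<and> (\<forall>i<N. x (Suc i) = x i - (h i / L) *\<^sub>R g (x i))
     \<and> f (x 0) - f (x N) = \<Delta>
     \<and> (norm (g (x N)))\<^sup>2 = L * (f (x 0) - f (x N)) / (\<Sum>i<N. h i)"
    by (rule part2[OF L_pos N_pos h_range])
next
  fix \<Delta> :: real assume "\<Delta> > 0"
  then show "\<exists>(f :: real \<Rightarrow> real) (g :: real \<Rightarrow> real) (x :: nat \<Rightarrow> real) (fstar :: real).
       convex_on UNIV f
     \<and> (\<forall>y. GDERIV f y :> g y)
     \<and> (\<forall>y z. norm (g y - g z) \<le> L * norm (y - z))
     \<and> (\<exists>y. f y = fstar) \<and> (\<forall>y. fstar \<le> f y)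
     \<and> (\<forall>i<N. x (Suc i) = x i - (h i / L) *\<^sub>R g (x i))
     \<and> f (x 0) - fstar = \<Delta>
     \<and> (norm (g (x N)))\<^sup>2 = L * (f (x 0) - fstar) / (1/2 + (\<Sum>i<N. h i))"
    by (rule part3[OF L_pos N_pos h_range])
qed

end
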